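(* With $\mathcal{F}$ the infinite rooted tree in which every vertex has $p$ children ($p\ge2$ an integer), for any integral weight functions $a,b$ on $\mathcal{F}$ with nonnegative integer weights $\omega_a,\omega_b$, $$\langle a,b\rangle\ \ge\ \sum_{i=0}^{\infty}p^i\,\widehat\gamma_i(\omega_a)\widehat\gamma_i(\omega_b)\ \ge\ \sum_{i=0}^{\infty}p^i\,\widetilde\gamma_i(\omega_a)\widetilde\gamma_i(\omega_b).$$
   Context: An integral weight function with weight $\omega$ is a map $a:V(\mathcal{F})\to\mathbb{Z}_{\ge0}$ such that every infinite path from the root has $\sum_{v\in T}a(v)\ge\omega$ and $a(v)\ge\sum_{u\text{ child of }v}a(u)$ for every vertex $v$; $\langle a,b\rangle=\sum_v a(v)b(v)$. An integral (resp. real) resolution of $\omega$ is a sequence $(\gamma_i)_{i\ge0}$ with values in $\mathbb{Z}_{\ge0}$ (resp. in $\{0\}\cup[1,\infty)$) such that $\gamma_i\ge p\gamma_{i+1}$ for all $i$ and $\sum_i\gamma_i=\omega$. $\widehat\gamma(\omega)$ (resp. $\widetilde\gamma(\omega)$) denotes the lexicographically smallest integral (resp. real) resolution of $\omega$. *)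

theory Defs
  imports "HOL-Analysis.Analysis"
begin

text \<open>Vertices of the infinite p-ary rooted tree: finite words over {0..<p};
  the root is the empty word, the children of v are v @ [c] for c < p.\<close>
definition tree_vertices :: "nat \<Rightarrow> nat list set" where
  "tree_vertices p = {v. set v \<subseteq> {..<p}}"

text \<open>An infinite path from the root is given by a choice sequence f with f k < p;
  its k-th vertex is map f [0..<k].\<close>
definition integral_weight_function :: "nat \<Rightarrow> nat \<Rightarrow> (nat list \<Rightarrow> nat) \<Rightarrow> bool" where
  "integral_weight_function p \<omega> a \<longleftrightarrow>
     (\<forall>f::nat \<Rightarrow> nat. (\<forall>k. f k < p) \<longrightarrow>
        (\<exists>n. (\<Sum>k<n. a (map f [0..<k])) \<ge> \<omega>)) \<and>
     (\<forall>v\<in>tree_vertices p. a v \<ge> (\<Sum>c<p. a (v @ [c])))"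

definition tree_inner :: "nat \<Rightarrow> (nat list \<Rightarrow> nat) \<Rightarrow> (nat list \<Rightarrow> nat) \<Rightarrow> ennreal" where
  "tree_inner p a b = (\<Sum>\<^sub>\<infinity> v\<in>tree_vertices p. of_nat (a v * b v))"

definition integral_resolution :: "nat \<Rightarrow> nat \<Rightarrow> (nat \<Rightarrow> nat) \<Rightarrow> bool" where
  "integral_resolution p \<omega> \<gamma> \<longleftrightarrow>
     (\<forall>i. \<gamma> i \<ge> p * \<gamma> (Suc i)) \<and> (\<lambda>i. real (\<gamma> i)) sums real \<omega>"

definition real_resolution :: "nat \<Rightarrow> nat \<Rightarrow> (nat \<Rightarrow> real) \<Rightarrow> bool" where
  "real_resolution p \<omega> \<gamma> \<longleftrightarrow>
     (\<forall>i. \<gamma> i = 0 \<or> \<gamma> i \<ge> 1) \<and> (\<forall>i. \<gamma> i \<ge> real p * \<gamma> (Suc i)) \<and> \<gamma> sums real \<omega>"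

definition lex_le :: "(nat \<Rightarrow> 'a::linorder) \<Rightarrow> (nat \<Rightarrow> 'a) \<Rightarrow> bool" where
  "lex_le x y \<longleftrightarrow> x = y \<or> (\<exists>i. (\<forall>j<i. x j = y j) \<and> x i < y i)"

definition gamma_hat :: "nat \<Rightarrow> nat \<Rightarrow> nat \<Rightarrow> nat" where
  "gamma_hat p \<omega> = (THE \<gamma>. integral_resolution p \<omega> \<gamma> \<and>
      (\<forall>\<delta>. integral_resolution p \<omega> \<delta> \<longrightarrow> lex_le \<gamma> \<delta>))"

definition gamma_tilde :: "nat \<Rightarrow> nat \<Rightarrow> nat \<Rightarrow> real" where
  "gamma_tilde p \<omega> = (THE \<gamma>. real_resolution p \<omega> \<gamma> \<and>
      (\<forall>\<delta>. real_resolution p \<omega> \<delta> \<longrightarrow> lex_le \<gamma> \<delta>))"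

end

theory Submission
  imports Defs
begin


definition S :: "nat \<Rightarrow> nat \<Rightarrow> nat" where
  "S p x = (\<Sum>k\<le>x. x div p ^ k)"

definition g0 :: "nat \<Rightarrow> nat \<Rightarrow> nat" where
  "g0 p w = (LEAST x. w \<le> S p x)"

lemma S_ge: "x \<le> S p x"
proof -
  have "x div p^0 \<le> (\<Sum>k\<le>x. x div p ^ k)" by (rule member_le_sum) auto
  then show ?thesis by (simp add: S_def)
qed

lemma S_0[simp]: "S p 0 = 0" unfolding S_def by simp

lemma S_mono: "x \<le> y \<Longrightarrow> S p x \<le> S p y"
  unfolding S_def
  by (rule order.trans[OF sum_mono[OF div_le_mono] sum_mono2]) auto

lemma g0_spec: "w \<le> S p (g0 p w)"
  unfolding g0_def by (rule LeastI[of _ w]) (rule S_ge)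

lemma g0_le: "w \<le> S p x \<Longrightarrow> g0 p w \<le> x"
  unfolding g0_def by (rule Least_le)

lemma g0_le_self: "g0 p w \<le> w"
  by (rule g0_le[OF S_ge])

lemma g0_0[simp]: "g0 p 0 = 0"
  using g0_le[of 0 p 0] by simp

lemma g0_pos: "w > 0 \<Longrightarrow> g0 p w > 0"
  using g0_spec[of w p] by (cases "g0 p w") auto

lemma g0_mono: "u \<le> w \<Longrightarrow> g0 p u \<le> g0 p w"
  using g0_spec[of w p] by (intro g0_le) simp

context fixes p :: nat assumes p2: "p \<ge> 2" begin

lemma div_pow_zero: "y < k \<Longrightarrow> y div p ^ k = 0"
proof -
  assume "y < k"
  have "k < 2 ^ k" by (rule less_exp)
  also have "\<dots> \<le> p ^ k" using p2 by (simp add: power_mono)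
  finally show ?thesis using \<open>y < k\<close> by simp
qed

lemma S_ext: "y \<le> N \<Longrightarrow> (\<Sum>k\<le>N. y div p ^ k) = S p y"
  unfolding S_def
  by (rule sum.mono_neutral_right) (auto simp: div_pow_zero)

lemma S_rec: "S p x = x + S p (x div p)"
proof (cases x)
  case 0 then show ?thesis by simp
next
  case (Suc m)
  have "S p x = (\<Sum>k\<le>Suc m. x div p ^ k)" using Suc by (simp add: S_def)
  also have "\<dots> = x + (\<Sum>k\<le>m. x div p ^ Suc k)"
    by (subst sum.atMost_Suc_shift) simp
  also have "(\<Sum>k\<le>m. x div p ^ Suc k) = (\<Sum>k\<le>m. (x div p) div p ^ k)"
    by (simp add: div_mult2_eq)
  also have "\<dots> = S p (x div p)"
  proof (rule S_ext)
    have "Suc m div p \<le> Suc m div 2" using p2 by (intro div_le_mono2) auto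
    also have "\<dots> \<le> m" by presburger
    finally show "x div p \<le> m" using Suc by simp
  qed
  finally show ?thesis .
qed

lemma S_Suc: "S p (Suc x) \<ge> Suc (S p x)"
  using S_rec[of "Suc x"] S_rec[of x] S_mono[of "x div p" "Suc x div p"]
  by (simp add: div_le_mono)

lemma g0_Suc: "g0 p (Suc w) \<le> Suc (g0 p w)"
  using g0_spec[of w p] S_Suc[of "g0 p w"] by (intro g0_le) simp

lemma lemA: "g0 p w \<le> s \<Longrightarrow> p * g0 p (w - s) \<le> s"
proof -
  assume "g0 p w \<le> s"
  then have "w \<le> S p s" using g0_spec[of w p] S_mono[of "g0 p w" s p] by simp
  then have "w - s \<le> S p (s div p)" using S_rec[of s] by simp
  then have "g0 p (w - s) \<le> s div p" by (rule g0_le)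
  then show ?thesis by (metis dual_order.trans mult.commute mult_le_mono1 div_times_less_eq_dividend)
qed

end

fun gh :: "nat \<Rightarrow> nat \<Rightarrow> nat \<Rightarrow> nat" where
  "gh p w 0 = g0 p w"
| "gh p w (Suc i) = gh p (w - g0 p w) i"

function Fr :: "nat \<Rightarrow> nat \<Rightarrow> nat \<Rightarrow> nat" where
  "Fr p u B = (if u = 0 \<or> B = 0 then 0 else g0 p u * g0 p B + p * Fr p (u - g0 p u) (B - g0 p B))"
  by auto
termination
  by (relation "Wellfounded.measure (\<lambda>(p,u,B). u)") (auto simp: g0_pos diff_less)

declare Fr.simps[simp del]

lemma Fr_0[simp]: "Fr p 0 B = 0" "Fr p u 0 = 0"
  by (simp_all add: Fr.simps)

lemma Fr_unfold: "Fr p u B = g0 p u * g0 p B + p * Fr p (u - g0 p u) (B - g0 p B)"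
  by (cases "u = 0 \<or> B = 0") (auto simp: Fr.simps[of p u B])

lemma Fr_sym: "Fr p u B = Fr p B u"
proof (induction p u B rule: Fr.induct)
  case (1 p u B)
  show ?case
    by (cases "u = 0 \<or> B = 0") (use 1 in \<open>auto simp: Fr.simps[of p u B] Fr.simps[of p B u]\<close>)
qed

lemma gh_0[simp]: "gh p 0 i = 0"
  by (induct i) auto

lemma gh_zero: "w \<le> i \<Longrightarrow> gh p w i = 0"
proof (induction i arbitrary: w)
  case 0 then show ?case by simp
next
  case (Suc i)
  show ?case
  proof (cases "w = 0")
    case False
    then have "w - g0 p w \<le> i" using g0_pos[of w p] Suc.prems by simp
    then show ?thesis using Suc.IH by simp
  qed simp
qed

lemma Fr_sum: "u \<le> n \<Longrightarrow> (\<Sum>i<n. p^i * gh p u i * gh p B i) = Fr p u B"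
proof (induction n arbitrary: u B)
  case 0 then show ?case by simp
next
  case (Suc n)
  have le: "u - g0 p u \<le> n"
    using Suc.prems g0_pos[of u p] by (cases "u = 0") auto
  have "(\<Sum>i<Suc n. p^i * gh p u i * gh p B i)
        = g0 p u * g0 p B + (\<Sum>i<n. p^Suc i * gh p u (Suc i) * gh p B (Suc i))"
    by (subst sum.lessThan_Suc_shift) simp
  also have "(\<Sum>i<n. p^Suc i * gh p u (Suc i) * gh p B (Suc i))
     = p * (\<Sum>i<n. p^i * gh p (u - g0 p u) i * gh p (B - g0 p B) i)"
    by (simp add: sum_distrib_left mult.assoc)
  also have "\<dots> = p * Fr p (u - g0 p u) (B - g0 p B)" using Suc.IH[OF le] by simp
  finally show ?case by (simp add: Fr_unfold[of p u B])
qed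

context fixes p :: nat assumes p2: "p \<ge> 2" begin

lemma Fr_inc: "Fr p u B \<le> Fr p (Suc u) B \<and> Fr p (Suc u) B \<le> Fr p u B + g0 p B"
proof (induction u arbitrary: B rule: less_induct)
  case (less u)
  define B' where "B' = B - g0 p B"
  show ?case
  proof (cases "g0 p (Suc u) = g0 p u")
    case True
    have "u > 0" using True g0_pos[of "Suc u" p] by (cases u) auto
    then have lt: "u - g0 p u < u" using g0_pos[of u p] by simp
    have eq: "Suc u - g0 p u = Suc (u - g0 p u)" using g0_le_self[of p u] by simp
    have IH: "Fr p (u - g0 p u) B' \<le> Fr p (Suc (u - g0 p u)) B'"
         "Fr p (Suc (u - g0 p u)) B' \<le> Fr p (u - g0 p u) B' + g0 p B'"
      using less.IH[OF lt, of B'] by auto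
    have A: "p * g0 p B' \<le> g0 p B" unfolding B'_def by (rule lemA[OF p2]) simp
    have e1: "Fr p (Suc u) B = g0 p u * g0 p B + p * Fr p (Suc (u - g0 p u)) B'"
      using Fr_unfold[of p "Suc u" B] True eq B'_def by simp
    have e2: "Fr p u B = g0 p u * g0 p B + p * Fr p (u - g0 p u) B'"
      using Fr_unfold[of p u B] B'_def by simp
    have "p * Fr p (Suc (u - g0 p u)) B' \<le> p * Fr p (u - g0 p u) B' + p * g0 p B'"
      using IH(2) by (metis add_mult_distrib2 mult_le_mono2)
    then show ?thesis using e1 e2 IH(1) A by simp
  next
    case False
    then have g: "g0 p (Suc u) = Suc (g0 p u)"
      using g0_Suc[OF p2, of u] g0_mono[of u "Suc u" p] by simp
    have eq: "Suc u - g0 p (Suc u) = u - g0 p u" using g by simp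
    have "Fr p (Suc u) B = Fr p u B + g0 p B"
      using Fr_unfold[of p "Suc u" B] Fr_unfold[of p u B] g eq by simp
    then show ?thesis by simp
  qed
qed

lemma Fr_add: "Fr p u B \<le> Fr p (u + t) B \<and> Fr p (u + t) B \<le> Fr p u B + t * g0 p B"
proof (induction t)
  case 0 then show ?case by simp
next
  case (Suc t)
  then show ?case using Fr_inc[of "u + t" B] by auto
qed

lemma Fr_mono1: "u \<le> u' \<Longrightarrow> Fr p u B \<le> Fr p u' B"
  using Fr_add[of u B "u' - u"] by simp

lemma star:
  assumes "g0 p A \<le> r" "g0 p B \<le> s"
  shows "Fr p A B \<le> r * s + p * Fr p (A - r) (B - s)"
proof -
  define a0 b0 x y where "a0 = g0 p A" "b0 = g0 p B" "x = r - a0" "y = s - b0"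
  have r: "r = a0 + x" and s: "s = b0 + y" using assms a0_b0_x_y_def by auto
  have h1: "Fr p (A - a0) (B - b0) \<le> Fr p (A - r) (B - b0) + x * g0 p (B - b0)"
  proof -
    have "Fr p (A - a0) (B - b0) \<le> Fr p ((A - r) + x) (B - b0)"
      by (rule Fr_mono1) (simp add: r)
    also have "\<dots> \<le> Fr p (A - r) (B - b0) + x * g0 p (B - b0)" using Fr_add by blast
    finally show ?thesis .
  qed
  have h2: "Fr p (A - r) (B - b0) \<le> Fr p (A - r) (B - s) + y * g0 p (A - r)"
  proof -
    have "Fr p (B - b0) (A - r) \<le> Fr p ((B - s) + y) (A - r)"
      by (rule Fr_mono1) (simp add: s)
    also have "\<dots> \<le> Fr p (B - s) (A - r) + y * g0 p (A - r)" using Fr_add by blast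
    finally show ?thesis by (simp add: Fr_sym[of p "A - r"])
  qed
  have h3: "p * g0 p (B - b0) \<le> b0" unfolding a0_b0_x_y_def by (rule lemA[OF p2]) simp
  have h4: "p * g0 p (A - r) \<le> r" using assms(1) by (rule lemA[OF p2])
  have "Fr p A B = a0 * b0 + p * Fr p (A - a0) (B - b0)"
    using Fr_unfold[of p A B] a0_b0_x_y_def by simp
  also have "\<dots> \<le> a0 * b0 + p * Fr p (A - r) (B - s) + x * (p * g0 p (B - b0)) + y * (p * g0 p (A - r))"
  proof -
    have "Fr p (A - a0) (B - b0) \<le> Fr p (A - r) (B - s) + y * g0 p (A - r) + x * g0 p (B - b0)"
      using h1 h2 by linarith
    then have "p * Fr p (A - a0) (B - b0) \<le> p * (Fr p (A - r) (B - s) + y * g0 p (A - r) + x * g0 p (B - b0))"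
      by (rule mult_le_mono2)
    then show ?thesis by (simp add: algebra_simps)
  qed
  also have "\<dots> \<le> a0 * b0 + p * Fr p (A - r) (B - s) + x * b0 + y * r"
    using h3 h4 by (intro add_mono mult_le_mono2) auto
  also have "\<dots> = r * s + p * Fr p (A - r) (B - s)"
    by (simp add: r s algebra_simps)
  finally show ?thesis .
qed

end


lemma lex_antisym:
  fixes x y :: "nat \<Rightarrow> 'a::linorder"
  assumes "lex_le x y" "lex_le y x" shows "x = y"
proof (rule ccontr)
  assume ne: "x \<noteq> y"
  obtain i where i: "\<forall>j<i. x j = y j" "x i < y i" using assms(1) ne unfolding lex_le_def by blast
  obtain k where k: "\<forall>j<k. y j = x j" "y k < x k" using assms(2) ne unfolding lex_le_def by blast
  show False
  proof (cases i k rule: linorder_cases)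
    case less then show ?thesis using i k by force
  next
    case equal then show ?thesis using i k by simp
  next
    case greater then show ?thesis using i k by force
  qed
qed

lemma gh_sum_fin: "w \<le> n \<Longrightarrow> (\<Sum>i<n. gh p w i) = w"
proof (induction n arbitrary: w)
  case 0 then show ?case by simp
next
  case (Suc n)
  have le: "w - g0 p w \<le> n"
    using Suc.prems g0_pos[of w p] by (cases "w = 0") auto
  have "(\<Sum>i<Suc n. gh p w i) = g0 p w + (\<Sum>i<n. gh p (w - g0 p w) i)"
    by (subst sum.lessThan_Suc_shift) simp
  then show ?case using Suc.IH[OF le] g0_le_self[of p w] by simp
qed

lemma gh_sums: "(\<lambda>i. real (gh p w i)) sums real w"
proof -
  have "(\<lambda>i. real (gh p w i)) sums (\<Sum>i<w. real (gh p w i))"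
    by (rule sums_finite) (auto simp: gh_zero)
  also have "(\<Sum>i<w. real (gh p w i)) = real w"
    using gh_sum_fin[of w w p] by (simp flip: of_nat_sum)
  finally show ?thesis .
qed

lemma Fr_suminf: "(\<Sum>i. real p ^ i * real (gh p u i) * real (gh p B i)) = real (Fr p u B)"
proof -
  have "(\<Sum>i. real p ^ i * real (gh p u i) * real (gh p B i))
      = (\<Sum>i<u. real p ^ i * real (gh p u i) * real (gh p B i))"
    by (rule suminf_finite) (auto simp: gh_zero)
  also have "\<dots> = real (\<Sum>i<u. p ^ i * gh p u i * gh p B i)"
    by (simp add: of_nat_sum)
  also have "\<dots> = real (Fr p u B)" using Fr_sum[of u u p B] by simp
  finally show ?thesis .
qed

context fixes p :: nat assumes p2: "p \<ge> 2" begin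

lemma gh_dec: "p * gh p w (Suc i) \<le> gh p w i"
proof (induction i arbitrary: w)
  case 0
  show ?case using lemA[OF p2, of w "g0 p w"] by simp
next
  case (Suc i)
  show ?case using Suc.IH[of "w - g0 p w"] by (simp only: gh.simps)
qed

lemma gh_res: "integral_resolution p w (gh p w)"
  unfolding integral_resolution_def using gh_dec gh_sums by auto

lemma res_bound: "integral_resolution p w \<delta> \<Longrightarrow> \<delta> i \<le> \<delta> 0 div p ^ i"
proof (induction i)
  case 0 then show ?case by simp
next
  case (Suc i)
  have "p * \<delta> (Suc i) \<le> \<delta> i" using Suc.prems unfolding integral_resolution_def by auto
  then have "\<delta> (Suc i) \<le> \<delta> i div p" using p2 by (simp add: less_eq_div_iff_mult_less_eq mult.commute)
  also have "\<dots> \<le> \<delta> 0 div p ^ i div p" using Suc by (simp add: div_le_mono)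
  also have "\<dots> = \<delta> 0 div p ^ Suc i" by (metis div_mult2_eq power_Suc2)
  finally show ?case .
qed

lemma res_sum: "integral_resolution p w \<delta> \<Longrightarrow> w = (\<Sum>i\<le>\<delta> 0. \<delta> i)"
proof -
  assume r: "integral_resolution p w \<delta>"
  have z: "\<delta> i = 0" if "i \<notin> {..\<delta> 0}" for i
    using res_bound[OF r, of i] div_pow_zero[OF p2, of "\<delta> 0" i] that by simp
  have "(\<lambda>i. real (\<delta> i)) sums (\<Sum>i\<le>\<delta> 0. real (\<delta> i))"
    by (rule sums_finite) (use z in auto)
  moreover have "(\<lambda>i. real (\<delta> i)) sums real w" using r unfolding integral_resolution_def by auto
  ultimately have "real w = (\<Sum>i\<le>\<delta> 0. real (\<delta> i))" using sums_unique2 by blast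
  then show ?thesis by (simp flip: of_nat_sum)
qed

lemma res_g0: "integral_resolution p w \<delta> \<Longrightarrow> g0 p w \<le> \<delta> 0"
proof -
  assume r: "integral_resolution p w \<delta>"
  have "w = (\<Sum>i\<le>\<delta> 0. \<delta> i)" by (rule res_sum[OF r])
  also have "\<dots> \<le> (\<Sum>i\<le>\<delta> 0. \<delta> 0 div p ^ i)" by (intro sum_mono res_bound[OF r])
  also have "\<dots> = S p (\<delta> 0)" by (simp add: S_def)
  finally show ?thesis by (rule g0_le)
qed

lemma res_first_le: "integral_resolution p w \<delta> \<Longrightarrow> \<delta> 0 \<le> w"
proof -
  assume r: "integral_resolution p w \<delta>"
  have "\<delta> 0 \<le> (\<Sum>i\<le>\<delta> 0. \<delta> i)" by (rule member_le_sum) auto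
  then show ?thesis using res_sum[OF r] by simp
qed

lemma res_shift: "integral_resolution p w \<delta> \<Longrightarrow> integral_resolution p (w - \<delta> 0) (\<lambda>i. \<delta> (Suc i))"
proof -
  assume r: "integral_resolution p w \<delta>"
  have le: "\<delta> 0 \<le> w" by (rule res_first_le[OF r])
  have "(\<lambda>i. real (\<delta> i)) sums (real (w - \<delta> 0) + real (\<delta> 0))"
    using r le unfolding integral_resolution_def by simp
  then have "(\<lambda>i. real (\<delta> (Suc i))) sums real (w - \<delta> 0)"
    by (subst sums_Suc_iff) simp
  then show ?thesis using r unfolding integral_resolution_def by auto
qed

lemma res_zero: "integral_resolution p 0 \<delta> \<Longrightarrow> \<delta> = (\<lambda>_. 0)"
proof -
  assume r: "integral_resolution p 0 \<delta>"
  have "\<delta> 0 = 0" using res_first_le[OF r] by simp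
  then show ?thesis using res_bound[OF r] by (auto intro!: ext)
qed

lemma gh_lex: "integral_resolution p w \<delta> \<Longrightarrow> lex_le (gh p w) \<delta>"
proof (induction w arbitrary: \<delta> rule: less_induct)
  case (less w)
  show ?case
  proof (cases "w = 0")
    case True
    then have "\<delta> = (\<lambda>_. 0)" using res_zero less.prems by simp
    moreover have "gh p w = (\<lambda>_. 0)" using True by (auto intro!: ext)
    ultimately show ?thesis by (simp add: lex_le_def)
  next
    case False
    have g: "g0 p w \<le> \<delta> 0" by (rule res_g0[OF less.prems])
    show ?thesis
    proof (cases "g0 p w < \<delta> 0")
      case True
      then show ?thesis unfolding lex_le_def by (intro disjI2 exI[of _ 0]) simp
    next
      case False
      then have eq: "\<delta> 0 = g0 p w" using g by simp
      have lt: "w - g0 p w < w" using \<open>w \<noteq> 0\<close> g0_pos[of w p] by simp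
      have "integral_resolution p (w - g0 p w) (\<lambda>i. \<delta> (Suc i))"
        using res_shift[OF less.prems] eq by simp
      then have L: "lex_le (gh p (w - g0 p w)) (\<lambda>i. \<delta> (Suc i))" by (rule less.IH[OF lt])
      show ?thesis
      proof (cases "gh p (w - g0 p w) = (\<lambda>i. \<delta> (Suc i))")
        case True
        have "gh p w = \<delta>"
        proof
          fix i show "gh p w i = \<delta> i"
            using True eq by (cases i) (auto dest: fun_cong)
        qed
        then show ?thesis by (simp add: lex_le_def)
      next
        case False
        then obtain i where i: "\<forall>j<i. gh p (w - g0 p w) j = \<delta> (Suc j)" "gh p (w - g0 p w) i < \<delta> (Suc i)"
          using L unfolding lex_le_def by auto
        have "\<forall>j<Suc i. gh p w j = \<delta> j"
        proof (intro allI impI)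
          fix j assume "j < Suc i" then show "gh p w j = \<delta> j"
            using i eq by (cases j) auto
        qed
        then show ?thesis unfolding lex_le_def using i(2) by (intro disjI2 exI[of _ "Suc i"]) simp
      qed
    qed
  qed
qed

lemma gamma_hat_eq: "gamma_hat p w = gh p w"
  unfolding gamma_hat_def
proof (rule the_equality)
  show "integral_resolution p w (gh p w) \<and> (\<forall>\<delta>. integral_resolution p w \<delta> \<longrightarrow> lex_le (gh p w) \<delta>)"
    using gh_res gh_lex by auto
next
  fix \<gamma> assume "integral_resolution p w \<gamma> \<and> (\<forall>\<delta>. integral_resolution p w \<delta> \<longrightarrow> lex_le \<gamma> \<delta>)"
  then show "\<gamma> = gh p w" using gh_res gh_lex lex_antisym by blast
qed

end


lemma summ_enn: "(g :: _ \<Rightarrow> ennreal) summable_on A"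
  by (rule nonneg_summable_on_complete) simp

lemma tv_Cons[simp]: "c # w \<in> tree_vertices p \<longleftrightarrow> c < p \<and> w \<in> tree_vertices p"
  by (auto simp: tree_vertices_def)

lemma tv_Nil[simp]: "[] \<in> tree_vertices p"
  by (auto simp: tree_vertices_def)

lemma tv_snoc: "v \<in> tree_vertices p \<Longrightarrow> c < p \<Longrightarrow> v @ [c] \<in> tree_vertices p"
  by (auto simp: tree_vertices_def)

lemma tv_decomp: "tree_vertices p = insert [] (\<Union>c<p. (\<lambda>w. c # w) ` tree_vertices p)"
proof (rule set_eqI)
  fix v show "v \<in> tree_vertices p \<longleftrightarrow> v \<in> insert [] (\<Union>c<p. (\<lambda>w. c # w) ` tree_vertices p)"
    by (cases v) auto
qed

lemma infsum_UN_Cons: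
  fixes g :: "nat list \<Rightarrow> ennreal"
  shows "infsum g (\<Union>c<n. (\<lambda>w. c # w) ` T) = (\<Sum>c<n. infsum (\<lambda>w. g (c # w)) T)"
proof (induction n)
  case 0 then show ?case by simp
next
  case (Suc n)
  have U: "(\<Union>c<Suc n. (\<lambda>w. c # w) ` T) = (\<Union>c<n. (\<lambda>w. c # w) ` T) \<union> (\<lambda>w. n # w) ` T"
    by (auto simp: lessThan_Suc)
  have "infsum g (\<Union>c<Suc n. (\<lambda>w. c # w) ` T)
      = infsum g (\<Union>c<n. (\<lambda>w. c # w) ` T) + infsum g ((\<lambda>w. n # w) ` T)"
    unfolding U by (rule infsum_Un_disjoint) (auto simp: summ_enn)
  also have "infsum g ((\<lambda>w. n # w) ` T) = infsum (\<lambda>w. g (n # w)) T"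
    by (subst infsum_reindex) (auto simp: inj_on_def comp_def)
  finally show ?case using Suc by simp
qed

lemma tree_split:
  "tree_inner p a b = of_nat (a [] * b []) + (\<Sum>c<p. tree_inner p (\<lambda>w. a (c # w)) (\<lambda>w. b (c # w)))"
proof -
  have "tree_inner p a b = (\<Sum>\<^sub>\<infinity> v\<in>insert [] (\<Union>c<p. (\<lambda>w. c # w) ` tree_vertices p). of_nat (a v * b v))"
    unfolding tree_inner_def by (subst tv_decomp) simp
  also have "\<dots> = of_nat (a [] * b []) + (\<Sum>\<^sub>\<infinity> v\<in>(\<Union>c<p. (\<lambda>w. c # w) ` tree_vertices p). of_nat (a v * b v))"
    by (rule infsum_insert) (auto simp: summ_enn)
  also have "(\<Sum>\<^sub>\<infinity> v\<in>(\<Union>c<p. (\<lambda>w. c # w) ` tree_vertices p). (of_nat (a v * b v) :: ennreal))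
     = (\<Sum>c<p. tree_inner p (\<lambda>w. a (c # w)) (\<lambda>w. b (c # w)))"
    unfolding tree_inner_def by (rule infsum_UN_Cons)
  finally show ?thesis .
qed

lemma map_shift: "map (\<lambda>k. case k of 0 \<Rightarrow> c | Suc j \<Rightarrow> f j) [0..<Suc k] = c # map f [0..<k]"
  by (induction k) auto

lemma child_iwf:
  assumes w: "integral_weight_function p \<omega> a" and c: "c < p"
  shows "integral_weight_function p (\<omega> - a []) (\<lambda>v. a (c # v))"
  unfolding integral_weight_function_def
proof (intro conjI allI impI ballI)
  fix f :: "nat \<Rightarrow> nat" assume f: "\<forall>k. f k < p"
  define f' where "f' = (\<lambda>k. case k of 0 \<Rightarrow> c | Suc j \<Rightarrow> f j)"
  have "\<forall>k. f' k < p" using f c by (auto simp: f'_def split: nat.split)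
  then obtain n where n: "\<omega> \<le> (\<Sum>k<n. a (map f' [0..<k]))"
    using w unfolding integral_weight_function_def by blast
  show "\<exists>n. \<omega> - a [] \<le> (\<Sum>k<n. a (c # map f [0..<k]))"
  proof (cases n)
    case 0 then show ?thesis using n by auto
  next
    case (Suc m)
    have "(\<Sum>k<n. a (map f' [0..<k])) = a [] + (\<Sum>k<m. a (map f' [0..<Suc k]))"
      unfolding Suc by (subst sum.lessThan_Suc_shift) simp
    also have "(\<Sum>k<m. a (map f' [0..<Suc k])) = (\<Sum>k<m. a (c # map f [0..<k]))"
      unfolding f'_def map_shift ..
    finally show ?thesis using n by (intro exI[of _ m]) simp
  qed
next
  fix v assume "v \<in> tree_vertices p"
  then have "c # v \<in> tree_vertices p" using c by simp
  then have "(\<Sum>c'<p. a ((c # v) @ [c'])) \<le> a (c # v)"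
    using w unfolding integral_weight_function_def by blast
  then show "(\<Sum>c'<p. a (c # (v @ [c']))) \<le> a (c # v)" by simp
qed

context fixes p :: nat assumes p2: "p \<ge> 2" begin

lemma root_bound:
  assumes w: "integral_weight_function p \<omega> a"
  shows "\<omega> \<le> S p (a [])"
proof -
  have ex: "\<exists>c. c < p \<and> p * a (v @ [c]) \<le> a v" if v: "v \<in> tree_vertices p" for v
  proof (rule ccontr)
    assume "\<not> ?thesis"
    then have lt: "\<And>c. c < p \<Longrightarrow> a v < p * a (v @ [c])" by auto
    have "(\<Sum>c<p. a v) < (\<Sum>c<p. p * a (v @ [c]))"
      using p2 by (intro sum_strict_mono lt) (auto simp: lessThan_empty_iff)
    also have "\<dots> = p * (\<Sum>c<p. a (v @ [c]))" by (simp add: sum_distrib_left)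
    also have "\<dots> \<le> p * a v" using w v unfolding integral_weight_function_def by auto
    finally show False by simp
  qed
  define ch where "ch v = (SOME c. c < p \<and> p * a (v @ [c]) \<le> a v)" for v
  have ch: "ch v < p \<and> p * a (v @ [ch v]) \<le> a v" if "v \<in> tree_vertices p" for v
    unfolding ch_def using someI_ex[OF ex[OF that]] .
  define pth where "pth k = ((\<lambda>v. v @ [ch v]) ^^ k) []" for k
  define f where "f k = ch (pth k)" for k
  have P: "pth k \<in> tree_vertices p \<and> map f [0..<k] = pth k \<and> a (pth k) \<le> a [] div p ^ k" for k
  proof (induction k)
    case 0 then show ?case by (simp add: pth_def)
  next
    case (Suc k)
    have ps: "pth (Suc k) = pth k @ [ch (pth k)]" by (simp add: pth_def)
    have c1: "ch (pth k) < p" "p * a (pth k @ [ch (pth k)]) \<le> a (pth k)" using ch Suc by auto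
    have "a (pth (Suc k)) \<le> a (pth k) div p"
      using c1(2) p2 ps by (simp add: less_eq_div_iff_mult_less_eq mult.commute)
    also have "\<dots> \<le> a [] div p ^ k div p" using Suc by (simp add: div_le_mono)
    also have "\<dots> = a [] div p ^ Suc k" by (metis div_mult2_eq power_Suc2)
    finally show ?case using Suc c1 ps by (auto simp: f_def tv_snoc)
  qed
  have "\<forall>k. f k < p" using P ch by (simp add: f_def)
  then obtain n where n: "\<omega> \<le> (\<Sum>k<n. a (map f [0..<k]))"
    using w unfolding integral_weight_function_def by blast
  also have "\<dots> = (\<Sum>k<n. a (pth k))" using P by simp
  also have "\<dots> \<le> (\<Sum>k<n. a [] div p ^ k)" using P by (intro sum_mono) auto
  also have "\<dots> \<le> (\<Sum>k\<le>max n (a []). a [] div p ^ k)" by (intro sum_mono2) auto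
  also have "\<dots> = S p (a [])" by (rule S_ext[OF p2]) simp
  finally show ?thesis .
qed

lemma tree_bound:
  assumes "integral_weight_function p wa a" "integral_weight_function p wb b"
  shows "of_nat (Fr p wa wb) \<le> tree_inner p a b"
  using assms
proof (induction wa arbitrary: wb a b rule: less_induct)
  case (less wa)
  show ?case
  proof (cases "wa = 0 \<or> wb = 0")
    case True then show ?thesis by auto
  next
    case False
    define r s where "r = a []" "s = b []"
    have gr: "g0 p wa \<le> r" unfolding r_s_def by (rule g0_le, rule root_bound[OF less.prems(1)])
    have gs: "g0 p wb \<le> s" unfolding r_s_def by (rule g0_le, rule root_bound[OF less.prems(2)])
    have lt: "wa - a [] < wa" using False gr g0_pos[of wa p] r_s_def by simp
    have IH: "of_nat (Fr p (wa - r) (wb - s)) \<le> tree_inner p (\<lambda>w. a (c # w)) (\<lambda>w. b (c # w))"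
      if "c < p" for c
      using less.IH[OF lt child_iwf[OF less.prems(1) that] child_iwf[OF less.prems(2) that]]
      unfolding r_s_def .
    have "(of_nat (Fr p wa wb) :: ennreal) \<le> of_nat (r * s + p * Fr p (wa - r) (wb - s))"
      using star[OF p2 gr gs] by (rule of_nat_mono)
    also have "\<dots> = of_nat (r * s) + (\<Sum>c<p. (of_nat (Fr p (wa - r) (wb - s)) :: ennreal))"
      by simp
    also have "\<dots> \<le> of_nat (r * s) + (\<Sum>c<p. tree_inner p (\<lambda>w. a (c # w)) (\<lambda>w. b (c # w)))"
      by (intro add_mono sum_mono IH) auto
    also have "\<dots> = tree_inner p a b" unfolding r_s_def by (rule tree_split[symmetric])
    finally show ?thesis .
  qed
qed

end


lemma cheb:
  fixes u v w :: "nat \<Rightarrow> real"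
  assumes u: "\<And>i j. i \<le> j \<Longrightarrow> j \<le> m \<Longrightarrow> u j \<le> u i"
    and v: "\<And>i j. i \<le> j \<Longrightarrow> j \<le> m \<Longrightarrow> v j \<le> v i"
    and w: "\<And>i. w i \<ge> 0"
  shows "(\<Sum>i\<le>m. w i * u i) * (\<Sum>i\<le>m. w i * v i) \<le> (\<Sum>i\<le>m. w i) * (\<Sum>i\<le>m. w i * u i * v i)"
proof -
  have nn: "0 \<le> w i * w j * ((u i - u j) * (v i - v j))" if "i \<le> m" "j \<le> m" for i j
  proof -
    have "0 \<le> (u i - u j) * (v i - v j)"
    proof (cases "i \<le> j")
      case True then show ?thesis using u[of i j] v[of i j] that by (intro mult_nonneg_nonneg) auto
    next
      case False then show ?thesis using u[of j i] v[of j i] that by (intro mult_nonpos_nonpos) auto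
    qed
    then show ?thesis using w[of i] w[of j] by simp
  qed
  have e: "w i * w j * ((u i - u j) * (v i - v j)) = (w i * u i * v i) * w j + w i * (w j * u j * v j)
      - (w i * u i) * (w j * v j) - (w i * v i) * (w j * u j)" for i j
    by (simp add: algebra_simps)
  have "0 \<le> (\<Sum>i\<le>m. \<Sum>j\<le>m. w i * w j * ((u i - u j) * (v i - v j)))"
    using nn by (intro sum_nonneg) auto
  also have "\<dots> = (\<Sum>i\<le>m. w i * u i * v i) * (\<Sum>i\<le>m. w i) + (\<Sum>i\<le>m. w i) * (\<Sum>i\<le>m. w i * u i * v i)
      - (\<Sum>i\<le>m. w i * u i) * (\<Sum>i\<le>m. w i * v i) - (\<Sum>i\<le>m. w i * v i) * (\<Sum>i\<le>m. w i * u i)"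
    by (simp only: e sum_subtractf sum.distrib sum_product)
  finally show ?thesis by (simp add: algebra_simps)
qed



definition kk :: "nat \<Rightarrow> nat \<Rightarrow> nat" where
  "kk p w = (LEAST k. w < (\<Sum>i\<le>Suc k. p ^ i))"

definition WW :: "nat \<Rightarrow> nat \<Rightarrow> real" where
  "WW p k = (\<Sum>i\<le>k. (1 / real p) ^ i)"

definition xx :: "nat \<Rightarrow> nat \<Rightarrow> real" where
  "xx p w = real w / WW p (kk p w)"

definition geo :: "nat \<Rightarrow> nat \<Rightarrow> nat \<Rightarrow> real" where
  "geo p w i = (if i \<le> kk p w then xx p w * (1 / real p) ^ i else 0)"

lemma WW_ge1: "WW p k \<ge> 1"
proof -
  have "(1 / real p) ^ 0 \<le> WW p k" unfolding WW_def by (rule member_le_sum) auto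
  then show ?thesis by simp
qed

lemma WW_pos: "WW p k > 0" using WW_ge1[of p k] by simp

lemma WW_mono: "m \<le> k \<Longrightarrow> WW p m \<le> WW p k"
  unfolding WW_def by (rule sum_mono2) auto

lemma WW_split: "m \<le> k \<Longrightarrow> WW p k = WW p m + (\<Sum>i\<in>{m<..k}. (1 / real p) ^ i)"
proof -
  assume "m \<le> k"
  then have "{..k} = {..m} \<union> {m<..k}" by auto
  then show ?thesis unfolding WW_def by (simp only:) (rule sum.union_disjoint, auto)
qed

lemma WW_id: "real p ^ k * WW p k = (\<Sum>i\<le>k. real p ^ i)" if "p > 0"
proof (induction k)
  case 0 then show ?case by (simp add: WW_def)
next
  case (Suc k)
  have "real p ^ Suc k * WW p (Suc k) = real p * (real p ^ k * WW p k) + real p ^ Suc k * (1 / real p) ^ Suc k"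
    by (simp add: WW_def algebra_simps)
  also have "real p ^ Suc k * (1 / real p) ^ Suc k = 1" using that by (simp add: power_one_over)
  also have "real p * (real p ^ k * WW p k) + 1 = (\<Sum>i\<le>Suc k. real p ^ i)"
    using Suc by (simp add: sum.atMost_Suc_shift sum_distrib_left del: sum.atMost_Suc)
  finally show ?case .
qed

context fixes p :: nat assumes p2: "p \<ge> 2" begin

lemma p_pos: "real p > 0" using p2 by simp

lemma kk_spec: "w < (\<Sum>i\<le>Suc (kk p w). p ^ i)"
  unfolding kk_def
proof (rule LeastI[of _ w])
  have "w < 2 ^ w" by (rule less_exp)
  also have "\<dots> \<le> 2 ^ Suc w" by simp
  also have "\<dots> \<le> p ^ Suc w" using p2 by (intro power_mono) auto
  also have "\<dots> \<le> (\<Sum>i\<le>Suc w. p ^ i)" by (rule member_le_sum) auto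
  finally show "w < (\<Sum>i\<le>Suc w. p ^ i)" .
qed

lemma kk_le: "w \<ge> 1 \<Longrightarrow> (\<Sum>i\<le>kk p w. p ^ i) \<le> w"
proof (cases "kk p w")
  case 0 then show "w \<ge> 1 \<Longrightarrow> ?thesis" by simp
next
  case (Suc j)
  have "\<not> w < (\<Sum>i\<le>Suc j. p ^ i)" using not_less_Least[of j "\<lambda>k. w < (\<Sum>i\<le>Suc k. p ^ i)"] Suc
    unfolding kk_def by simp
  then show ?thesis using Suc by simp
qed

lemma kk_real: "real w < (\<Sum>i\<le>Suc (kk p w). real p ^ i)"
proof -
  have "real w < real (\<Sum>i\<le>Suc (kk p w). p ^ i)" using kk_spec[of w] by (simp only: of_nat_less_iff)
  then show ?thesis by simp
qed

lemma rr_nonneg: "real_resolution p w \<delta> \<Longrightarrow> \<delta> i \<ge> 0"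
proof -
  assume "real_resolution p w \<delta>"
  then have "\<delta> i = 0 \<or> \<delta> i \<ge> 1" unfolding real_resolution_def by blast
  then show ?thesis by auto
qed

lemma rr_step: "real_resolution p w \<delta> \<Longrightarrow> \<delta> (i + t) * real p ^ t \<le> \<delta> i"
proof (induction t)
  case 0 then show ?case by simp
next
  case (Suc t)
  have "\<delta> (Suc (i + t)) * real p \<le> \<delta> (i + t)"
    using Suc.prems unfolding real_resolution_def by (simp add: mult.commute)
  then have "\<delta> (Suc (i + t)) * real p * real p ^ t \<le> \<delta> (i + t) * real p ^ t"
    by (rule mult_right_mono) simp
  then show ?case using Suc by (simp add: algebra_simps)
qed

lemma rr_upper: "real_resolution p w \<delta> \<Longrightarrow> m \<le> i \<Longrightarrow> \<delta> i \<le> \<delta> m * real p ^ m * (1 / real p) ^ i"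
proof -
  assume r: "real_resolution p w \<delta>" and mi: "m \<le> i"
  have "\<delta> (m + (i - m)) * real p ^ (i - m) \<le> \<delta> m" by (rule rr_step[OF r])
  then have "\<delta> i * real p ^ (i - m) \<le> \<delta> m" using mi by simp
  moreover have "real p ^ (i - m) = real p ^ i / real p ^ m" using p_pos mi by (simp add: power_diff)
  ultimately have "\<delta> i * real p ^ i \<le> \<delta> m * real p ^ m" using p_pos
    by (simp add: field_simps)
  then show ?thesis using p_pos by (simp add: field_simps power_one_over)
qed

lemma rr_lower: "real_resolution p w \<delta> \<Longrightarrow> i \<le> m \<Longrightarrow> \<delta> m * real p ^ m * (1 / real p) ^ i \<le> \<delta> i"
proof -
  assume r: "real_resolution p w \<delta>" and mi: "i \<le> m"
  have "\<delta> (i + (m - i)) * real p ^ (m - i) \<le> \<delta> i" by (rule rr_step[OF r])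
  then have "\<delta> m * real p ^ (m - i) \<le> \<delta> i" using mi by simp
  moreover have "real p ^ (m - i) = real p ^ m / real p ^ i" using p_pos mi by (simp add: power_diff)
  ultimately show ?thesis using p_pos by (simp add: field_simps power_one_over)
qed

lemma rr_support: "real_resolution p w \<delta> \<Longrightarrow> kk p w < i \<Longrightarrow> \<delta> i = 0"
proof (rule ccontr)
  assume r: "real_resolution p w \<delta>" and ki: "kk p w < i" and ne: "\<delta> i \<noteq> 0"
  define K where "K = Suc (kk p w)"
  have Ki: "K \<le> i" using ki K_def by simp
  have "\<delta> K \<noteq> 0"
  proof
    assume "\<delta> K = 0"
    then have "\<delta> i \<le> 0" using rr_upper[OF r Ki] by simp
    then show False using ne rr_nonneg[OF r, of i] by simp
  qed
  then have dK: "\<delta> K \<ge> 1" using r unfolding real_resolution_def by auto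
  have "(\<Sum>i\<le>K. real p ^ i) = real p ^ K * WW p K" using WW_id[of p K] p2 by simp
  also have "\<dots> = (\<Sum>i\<le>K. 1 * real p ^ K * (1 / real p) ^ i)" by (simp add: WW_def sum_distrib_left)
  also have "\<dots> \<le> (\<Sum>i\<le>K. \<delta> K * real p ^ K * (1 / real p) ^ i)"
    using dK by (intro sum_mono mult_right_mono) auto
  also have "\<dots> \<le> (\<Sum>i\<le>K. \<delta> i)" by (intro sum_mono rr_lower[OF r]) auto
  also have "\<dots> \<le> suminf \<delta>"
    using r rr_nonneg[OF r] unfolding real_resolution_def by (intro sum_le_suminf) (auto simp: sums_summable)
  also have "\<dots> = real w" using r unfolding real_resolution_def by (simp add: sums_unique[symmetric])
  finally show False using kk_real[of w] K_def by simp
qed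

lemma rr_sum: "real_resolution p w \<delta> \<Longrightarrow> real w = (\<Sum>i\<le>kk p w. \<delta> i)"
proof -
  assume r: "real_resolution p w \<delta>"
  have "\<delta> sums (\<Sum>i\<le>kk p w. \<delta> i)" by (rule sums_finite) (use rr_support[OF r] in auto)
  moreover have "\<delta> sums real w" using r unfolding real_resolution_def by auto
  ultimately show ?thesis using sums_unique2 by blast
qed

lemma rr_first: "real_resolution p w \<delta> \<Longrightarrow> xx p w \<le> \<delta> 0"
proof -
  assume r: "real_resolution p w \<delta>"
  have "real w \<le> (\<Sum>i\<le>kk p w. \<delta> 0 * real p ^ 0 * (1 / real p) ^ i)"
    unfolding rr_sum[OF r] by (intro sum_mono rr_upper[OF r]) auto
  also have "\<dots> = \<delta> 0 * WW p (kk p w)" by (simp add: WW_def sum_distrib_left)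
  finally show ?thesis unfolding xx_def using WW_pos[of p "kk p w"] by (simp add: divide_le_eq)
qed

lemma rr_eq: "real_resolution p w \<delta> \<Longrightarrow> \<delta> 0 = xx p w \<Longrightarrow> \<delta> = geo p w"
proof -
  assume r: "real_resolution p w \<delta>" and e: "\<delta> 0 = xx p w"
  define k where "k = kk p w"
  have le: "\<delta> i \<le> xx p w * (1 / real p) ^ i" for i using rr_upper[OF r, of 0 i] e by simp
  have "(\<Sum>i\<le>k. xx p w * (1 / real p) ^ i - \<delta> i) = xx p w * WW p k - real w"
    using rr_sum[OF r] by (simp add: k_def sum_subtractf WW_def sum_distrib_left)
  also have "\<dots> = 0" unfolding xx_def k_def using WW_pos[of p "kk p w"] by simp
  finally have "\<forall>i\<in>{..k}. xx p w * (1 / real p) ^ i - \<delta> i = 0"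
    using le by (subst sum_nonneg_eq_0_iff[symmetric]) auto
  then show ?thesis
    using rr_support[OF r] by (auto intro!: ext simp: geo_def k_def)
qed

lemma geo_rr: "real_resolution p w (geo p w)"
proof (cases "w = 0")
  case True
  then have "geo p w = (\<lambda>_. 0)" by (auto intro!: ext simp: geo_def xx_def)
  then show ?thesis using True by (simp add: real_resolution_def)
next
  case False
  define k where "k = kk p w"
  have x_ge: "xx p w * (1 / real p) ^ k \<ge> 1"
  proof -
    have "(\<Sum>i\<le>k. real p ^ i) \<le> real w"
    proof -
      have "(\<Sum>i\<le>k. p ^ i) \<le> w" using kk_le[of w] False unfolding k_def by simp
      then have "real (\<Sum>i\<le>k. p ^ i) \<le> real w" by (simp only: of_nat_le_iff)
      then show ?thesis by simp
    qed
    then have "real p ^ k * WW p k \<le> real w" using WW_id[of p k] p2 by simp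
    then have "real p ^ k \<le> xx p w" unfolding xx_def k_def using WW_pos[of p "kk p w"]
      by (simp add: le_divide_eq)
    then show ?thesis using p_pos by (simp add: power_one_over field_simps)
  qed
  have xpos: "xx p w \<ge> 0" unfolding xx_def using WW_pos[of p "kk p w"] by simp
  have vals: "geo p w i = 0 \<or> geo p w i \<ge> 1" for i
  proof (cases "i \<le> k")
    case True
    have "(1 / real p) ^ k \<le> (1 / real p) ^ i"
      using True p2 by (intro power_decreasing) auto
    then have "xx p w * (1 / real p) ^ k \<le> xx p w * (1 / real p) ^ i"
      using xpos by (intro mult_left_mono) auto
    then show ?thesis using True x_ge by (simp add: geo_def k_def)
  qed (simp add: geo_def k_def)
  have dec: "geo p w i \<ge> real p * geo p w (Suc i)" for i
  proof -
    consider "Suc i \<le> k" | "i = k" | "k < i" by linarith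
    then show ?thesis
    proof cases
      case 1 then show ?thesis using p_pos by (simp add: geo_def k_def field_simps)
    next
      case 2 then show ?thesis using xpos by (simp add: geo_def k_def)
    next
      case 3 then show ?thesis by (simp add: geo_def k_def)
    qed
  qed
  have "geo p w sums (\<Sum>i\<le>k. geo p w i)" by (rule sums_finite) (auto simp: geo_def k_def)
  also have "(\<Sum>i\<le>k. geo p w i) = xx p w * WW p k" by (simp add: geo_def k_def WW_def sum_distrib_left)
  also have "\<dots> = real w" unfolding xx_def k_def using WW_pos[of p "kk p w"] by simp
  finally show ?thesis using vals dec unfolding real_resolution_def by auto
qed

lemma gamma_tilde_eq: "gamma_tilde p w = geo p w"
  unfolding gamma_tilde_def
proof (rule the_equality)
  have lex: "lex_le (geo p w) \<delta>" if r: "real_resolution p w \<delta>" for \<delta>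
  proof (cases "\<delta> 0 = xx p w")
    case True then show ?thesis using rr_eq[OF r] by (simp add: lex_le_def)
  next
    case False
    then have "geo p w 0 < \<delta> 0" using rr_first[OF r] by (simp add: geo_def)
    then show ?thesis unfolding lex_le_def by (intro disjI2 exI[of _ 0]) simp
  qed
  show "real_resolution p w (geo p w) \<and> (\<forall>\<delta>. real_resolution p w \<delta> \<longrightarrow> lex_le (geo p w) \<delta>)"
    using geo_rr lex by auto
  fix \<gamma> assume "real_resolution p w \<gamma> \<and> (\<forall>\<delta>. real_resolution p w \<delta> \<longrightarrow> lex_le \<gamma> \<delta>)"
  then show "\<gamma> = geo p w" using geo_rr lex lex_antisym by blast
qed



lemma qp: "(1 / real p) ^ i * real p ^ i = 1"
  using p_pos by (simp add: power_one_over)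

lemma prefix:
  assumes r: "real_resolution p w \<delta>" and m: "m \<le> kk p w"
  shows "xx p w * WW p m \<le> (\<Sum>i\<le>m. \<delta> i)"
proof -
  define k where "k = kk p w"
  define P T D where "P = (\<Sum>i\<le>m. \<delta> i)" "T = (\<Sum>i\<in>{m<..k}. \<delta> i)" "D = (\<Sum>i\<in>{m<..k}. (1 / real p) ^ i)"
  have mk: "m \<le> k" using m k_def by simp
  have "{..k} = {..m} \<union> {m<..k}" using mk by auto
  then have PT: "real w = P + T" unfolding P_T_D_def using rr_sum[OF r] k_def
    by (simp only:) (subst sum.union_disjoint, auto)
  have Wk: "WW p k = WW p m + D" unfolding P_T_D_def by (rule WW_split[OF mk])
  have hP: "\<delta> m * real p ^ m * WW p m \<le> P"
  proof -
    have "\<delta> m * real p ^ m * WW p m = (\<Sum>i\<le>m. \<delta> m * real p ^ m * (1 / real p) ^ i)"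
      by (simp add: WW_def sum_distrib_left)
    also have "\<dots> \<le> P" unfolding P_T_D_def by (intro sum_mono rr_lower[OF r]) auto
    finally show ?thesis .
  qed
  have hT: "T \<le> \<delta> m * real p ^ m * D"
  proof -
    have "T \<le> (\<Sum>i\<in>{m<..k}. \<delta> m * real p ^ m * (1 / real p) ^ i)"
      unfolding P_T_D_def by (intro sum_mono rr_upper[OF r]) auto
    also have "\<dots> = \<delta> m * real p ^ m * D" by (simp add: P_T_D_def sum_distrib_left)
    finally show ?thesis .
  qed
  have D0: "D \<ge> 0" unfolding P_T_D_def by (intro sum_nonneg) simp
  have Wm0: "WW p m \<ge> 0" using WW_pos[of p m] by simp
  have "T * WW p m \<le> \<delta> m * real p ^ m * D * WW p m" using hT Wm0 by (rule mult_right_mono)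
  also have "\<dots> = (\<delta> m * real p ^ m * WW p m) * D" by simp
  also have "\<dots> \<le> P * D" using hP D0 by (rule mult_right_mono)
  finally have TD: "T * WW p m \<le> P * D" .
  have "xx p w * WW p k = real w" unfolding xx_def k_def using WW_pos[of p "kk p w"] by simp
  then have "(xx p w * WW p m) * WW p k = (P + T) * WW p m" using PT
    by (metis mult.assoc mult.commute)
  also have "\<dots> \<le> P * WW p k" using TD Wk by (simp add: algebra_simps)
  finally show ?thesis using WW_pos[of p k] unfolding P_T_D_def by simp
qed

lemma second:
  assumes c: "real_resolution p wa c" and d: "real_resolution p wb d"
  shows "(\<Sum>i. real p ^ i * geo p wa i * geo p wb i) \<le> (\<Sum>i. real p ^ i * c i * d i)"
proof -
  define m where "m = min (kk p wa) (kk p wb)"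
  have ma: "m \<le> kk p wa" and mb: "m \<le> kk p wb" by (auto simp: m_def)
  have L: "(\<Sum>i. real p ^ i * geo p wa i * geo p wb i) = xx p wa * xx p wb * WW p m"
  proof -
    have "(\<Sum>i. real p ^ i * geo p wa i * geo p wb i) = (\<Sum>i\<le>m. real p ^ i * geo p wa i * geo p wb i)"
      by (rule suminf_finite) (auto simp: geo_def m_def)
    also have "\<dots> = (\<Sum>i\<le>m. xx p wa * xx p wb * (1 / real p) ^ i)"
    proof (rule sum.cong)
      fix i assume "i \<in> {..m}"
      then have "i \<le> kk p wa" "i \<le> kk p wb" using ma mb by auto
      then have "real p ^ i * geo p wa i * geo p wb i
          = xx p wa * xx p wb * (1 / real p) ^ i * ((1 / real p) ^ i * real p ^ i)"
        by (simp add: geo_def algebra_simps)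
      then show "real p ^ i * geo p wa i * geo p wb i = xx p wa * xx p wb * (1 / real p) ^ i"
        by (simp add: qp)
    qed simp
    also have "\<dots> = xx p wa * xx p wb * WW p m" by (simp add: WW_def sum_distrib_left)
    finally show ?thesis .
  qed
  define Sm where "Sm = (\<Sum>i\<le>m. real p ^ i * c i * d i)"
  have summ: "summable (\<lambda>i. real p ^ i * c i * d i)"
    by (rule summable_finite[of "{..kk p wa}"]) (auto simp: rr_support[OF c])
  have SmLe: "Sm \<le> (\<Sum>i. real p ^ i * c i * d i)"
    unfolding Sm_def using summ rr_nonneg[OF c] rr_nonneg[OF d]
    by (intro sum_le_suminf) auto
  have ch: "(\<Sum>i\<le>m. (1 / real p) ^ i * (real p ^ i * c i)) * (\<Sum>i\<le>m. (1 / real p) ^ i * (real p ^ i * d i))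
      \<le> (\<Sum>i\<le>m. (1 / real p) ^ i) * (\<Sum>i\<le>m. (1 / real p) ^ i * (real p ^ i * c i) * (real p ^ i * d i))"
  proof (rule cheb)
    have anti: "real p ^ j * \<delta> j \<le> real p ^ i * \<delta> i" if r: "real_resolution p w \<delta>" and ij: "i \<le> j" for w \<delta> i j
    proof -
      have "\<delta> j \<le> \<delta> i * real p ^ i * (1 / real p) ^ j" by (rule rr_upper[OF r ij])
      then have "real p ^ j * \<delta> j \<le> real p ^ j * (\<delta> i * real p ^ i * (1 / real p) ^ j)"
        using p_pos by (intro mult_left_mono) auto
      also have "\<dots> = \<delta> i * real p ^ i * ((1 / real p) ^ j * real p ^ j)" by (simp add: algebra_simps)
      also have "\<dots> = \<delta> i * real p ^ i" using qp[of j] by simp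
      finally show ?thesis by (simp add: mult.commute)
    qed
    show "\<And>i j. i \<le> j \<Longrightarrow> j \<le> m \<Longrightarrow> real p ^ j * c j \<le> real p ^ i * c i" using anti[OF c] by blast
    show "\<And>i j. i \<le> j \<Longrightarrow> j \<le> m \<Longrightarrow> real p ^ j * d j \<le> real p ^ i * d i" using anti[OF d] by blast
    show "\<And>i. 0 \<le> (1 / real p) ^ i" by simp
  qed
  have e1: "(1 / real p) ^ i * (real p ^ i * x) = x" for i x
    using qp[of i] by (simp add: algebra_simps)
  have e2: "(1 / real p) ^ i * (real p ^ i * c i) * (real p ^ i * d i) = real p ^ i * c i * d i" for i
    using qp[of i] by (simp add: algebra_simps)
  have ch': "(\<Sum>i\<le>m. c i) * (\<Sum>i\<le>m. d i) \<le> WW p m * Sm"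
    using ch unfolding e2 unfolding e1 Sm_def WW_def .
  have pa: "xx p wa * WW p m \<le> (\<Sum>i\<le>m. c i)" by (rule prefix[OF c ma])
  have pb: "xx p wb * WW p m \<le> (\<Sum>i\<le>m. d i)" by (rule prefix[OF d mb])
  have xa0: "0 \<le> xx p wa * WW p m" and xb0: "0 \<le> xx p wb * WW p m"
    using WW_pos[of p] by (auto simp: xx_def less_imp_le)
  have "(xx p wa * WW p m) * (xx p wb * WW p m) \<le> (\<Sum>i\<le>m. c i) * (\<Sum>i\<le>m. d i)"
    by (rule mult_mono[OF pa pb]) (use order.trans[OF xa0 pa] xb0 in auto)
  also have "\<dots> \<le> WW p m * Sm" by (rule ch')
  finally have "WW p m * (xx p wa * xx p wb * WW p m) \<le> WW p m * Sm" by (simp add: algebra_simps)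
  then have "xx p wa * xx p wb * WW p m \<le> Sm" using WW_pos[of p m] by simp
  then show ?thesis using L SmLe by simp
qed

end

theorem mainTheorem6:
  fixes p :: nat and a b :: "nat list \<Rightarrow> nat" and \<omega>a \<omega>b :: nat
  assumes "p \<ge> 2"
    and "integral_weight_function p \<omega>a a"
    and "integral_weight_function p \<omega>b b"
  shows "ennreal (\<Sum>i. real p ^ i * real (gamma_hat p \<omega>a i) * real (gamma_hat p \<omega>b i))
           \<le> tree_inner p a b
       \<and> (\<Sum>i. real p ^ i * gamma_tilde p \<omega>a i * gamma_tilde p \<omega>b i)
           \<le> (\<Sum>i. real p ^ i * real (gamma_hat p \<omega>a i) * real (gamma_hat p \<omega>b i))"
proof
  have S1: "(\<Sum>i. real p ^ i * real (gamma_hat p \<omega>a i) * real (gamma_hat p \<omega>b i)) = real (Fr p \<omega>a \<omega>b)"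
    by (simp add: gamma_hat_eq[OF assms(1)] Fr_suminf)
  have "of_nat (Fr p \<omega>a \<omega>b) \<le> tree_inner p a b" by (rule tree_bound[OF assms])
  then show "ennreal (\<Sum>i. real p ^ i * real (gamma_hat p \<omega>a i) * real (gamma_hat p \<omega>b i)) \<le> tree_inner p a b"
    unfolding S1 by (simp add: ennreal_of_nat_eq_real_of_nat)
  have rr: "real_resolution p w (\<lambda>i. real (gamma_hat p w i))" for w
  proof -
    have "integral_resolution p w (gamma_hat p w)" using gh_res[OF assms(1)] gamma_hat_eq[OF assms(1)] by simp
    then show ?thesis unfolding integral_resolution_def real_resolution_def
      by (auto simp flip: of_nat_mult)
  qed
  show "(\<Sum>i. real p ^ i * gamma_tilde p \<omega>a i * gamma_tilde p \<omega>b i)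
           \<le> (\<Sum>i. real p ^ i * real (gamma_hat p \<omega>a i) * real (gamma_hat p \<omega>b i))"
    unfolding gamma_tilde_eq[OF assms(1)] by (rule second[OF assms(1) rr rr])
qed

end
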